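(* Let $\mathcal{A}$ be a GVA over an infinite alphabet $\Sigma$ with $n$ variables and with set of constants $\Sigma_{\mathcal{A}}=\{c_1,\ldots,c_k\}$. Let $a_1,\ldots,a_n$ be pairwise distinct letters of $\Sigma\setminus\Sigma_{\mathcal{A}}$ and let $\boldsymbol{\Sigma}=\{a_1,\ldots,a_n,c_1,\ldots,c_k\}$. Then $L(\mathcal{A})\neq\emptyset$ if and only if $L(\mathcal{A})\cap\boldsymbol{\Sigma}^{\star}\neq\emptyset$.
   Context: A guard over a set of variables $\mathcal{X}$ (disjoint from $\Sigma$) is built by the grammar $g ::= \mathit{true} \mid \alpha=\beta \mid \alpha\neq\beta \mid g\wedge g$ with $\alpha,\beta\in\Sigma\cup\mathcal{X}$. A GVA is a tuple $\mathcal{A}=\langle\Sigma,\mathcal{X},Q,Q_0,\delta,F,\kappa\rangle$ where $\mathcal{X}$ is a finite set of variables (its number of variables is $|\mathcal{X}|$), $Q$ a finite set of states, $Q_0\subseteq Q$ the initial states, $F\subseteq Q$ the accepting states, $\delta$ a finite set of transitions $q\xrightarrow{\alpha,g}q'$ with $q,q'\in Q$, $\alpha\in\Sigma\cup\mathcal{X}\cup\{\varepsilon\}$ and $g$ a guard, and $\kappa:\mathcal{X}\to 2^{Q}$ the refreshing function ($\kappa(x)$ is the set of states in which $x$ is freed). The constants $\Sigma_{\mathcal{A}}$ of $\mathcal{A}$ are the (finitely many) letters of $\Sigma$ occurring in its transitions (labels or guards). A configuration is a pair $(\sigma,q)$ with $q\in Q$ and $\sigma$ a partial map $\mathcal{X}\to\Sigma$.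 There is a step $(\sigma,q)\xrightarrow{a}(\sigma',q')$, $a\in\Sigma\cup\{\varepsilon\}$, if there is a transition $q\xrightarrow{\alpha,g}q'$ and a map $\gamma$ from the variables occurring in $\alpha$ or $g$ that are not in $\mathrm{dom}(\sigma)$ to $\Sigma$ such that, with $\rho=\sigma\uplus\gamma$ (extended to be the identity on letters), $\rho$ satisfies $g$, $a=\rho(\alpha)$ if $\alpha\neq\varepsilon$ and $a=\varepsilon$ if $\alpha=\varepsilon$, and $\sigma'$ is the restriction of $\rho$ to $\{x\in\mathrm{dom}(\rho) : q'\notin\kappa(x)\}$. A word $w\in\Sigma^{\star}$ is accepted if there is a sequence of steps from $(\emptyset,q_0)$ with $q_0\in Q_0$ to some $(\sigma,q_f)$ with $q_f\in F$ whose labels concatenate to $w$; $L(\mathcal{A})$ is the set of accepted words. *)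

theory Defs
  imports Main
begin

datatype ('a, 'x) sym = Letter 'a | Var 'x

datatype ('a, 'x) guard =
    GTrue
  | GEq "('a, 'x) sym" "('a, 'x) sym"
  | GNeq "('a, 'x) sym" "('a, 'x) sym"
  | GAnd "('a, 'x) guard" "('a, 'x) guard"

text \<open>A GVA; a transition label is an optional symbol (None = epsilon).\<close>
record ('a, 'x, 'q) gva =
  vars :: "'x set"
  states :: "'q set"
  init :: "'q set"
  trans :: "('q \<times> ('a, 'x) sym option \<times> ('a, 'x) guard \<times> 'q) set"
  final :: "'q set"
  kappa :: "'x \<Rightarrow> 'q set"

fun sym_vars :: "('a, 'x) sym \<Rightarrow> 'x set" where
  "sym_vars (Letter a) = {}"
| "sym_vars (Var x) = {x}"

fun sym_letters :: "('a, 'x) sym \<Rightarrow> 'a set" where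
  "sym_letters (Letter a) = {a}"
| "sym_letters (Var x) = {}"

fun guard_vars :: "('a, 'x) guard \<Rightarrow> 'x set" where
  "guard_vars GTrue = {}"
| "guard_vars (GEq s t) = sym_vars s \<union> sym_vars t"
| "guard_vars (GNeq s t) = sym_vars s \<union> sym_vars t"
| "guard_vars (GAnd g h) = guard_vars g \<union> guard_vars h"

fun guard_letters :: "('a, 'x) guard \<Rightarrow> 'a set" where
  "guard_letters GTrue = {}"
| "guard_letters (GEq s t) = sym_letters s \<union> sym_letters t"
| "guard_letters (GNeq s t) = sym_letters s \<union> sym_letters t"
| "guard_letters (GAnd g h) = guard_letters g \<union> guard_letters h"

definition label_vars :: "('a, 'x) sym option \<Rightarrow> 'x set" where
  "label_vars l = (case l of None \<Rightarrow> {} | Some s \<Rightarrow> sym_vars s)"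

definition label_letters :: "('a, 'x) sym option \<Rightarrow> 'a set" where
  "label_letters l = (case l of None \<Rightarrow> {} | Some s \<Rightarrow> sym_letters s)"

definition wf_gva :: "('a, 'x, 'q) gva \<Rightarrow> bool" where
  "wf_gva A \<longleftrightarrow> finite (vars A) \<and> finite (states A) \<and> finite (trans A)
     \<and> init A \<subseteq> states A \<and> final A \<subseteq> states A
     \<and> (\<forall>x. kappa A x \<subseteq> states A)
     \<and> (\<forall>(q, l, g, q') \<in> trans A. q \<in> states A \<and> q' \<in> states A
          \<and> label_vars l \<subseteq> vars A \<and> guard_vars g \<subseteq> vars A)"

definition gva_consts :: "('a, 'x, 'q) gva \<Rightarrow> 'a set" where
  "gva_consts A = (\<Union>(q, l, g, q') \<in> trans A. label_letters l \<union> guard_letters g)"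

fun eval_sym :: "('x \<rightharpoonup> 'a) \<Rightarrow> ('a, 'x) sym \<Rightarrow> 'a option" where
  "eval_sym \<rho> (Letter a) = Some a"
| "eval_sym \<rho> (Var x) = \<rho> x"

fun sat :: "('x \<rightharpoonup> 'a) \<Rightarrow> ('a, 'x) guard \<Rightarrow> bool" where
  "sat \<rho> GTrue = True"
| "sat \<rho> (GEq s t) = (eval_sym \<rho> s \<noteq> None \<and> eval_sym \<rho> t \<noteq> None \<and> eval_sym \<rho> s = eval_sym \<rho> t)"
| "sat \<rho> (GNeq s t) = (eval_sym \<rho> s \<noteq> None \<and> eval_sym \<rho> t \<noteq> None \<and> eval_sym \<rho> s \<noteq> eval_sym \<rho> t)"
| "sat \<rho> (GAnd g h) = (sat \<rho> g \<and> sat \<rho> h)"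

type_synonym ('a, 'x, 'q) config = "('x \<rightharpoonup> 'a) \<times> 'q"

definition gva_step :: "('a, 'x, 'q) gva \<Rightarrow> ('a, 'x, 'q) config \<Rightarrow> 'a option
     \<Rightarrow> ('a, 'x, 'q) config \<Rightarrow> bool" where
  "gva_step A c a c' \<longleftrightarrow>
     (\<exists>l g \<gamma>. (snd c, l, g, snd c') \<in> trans A
        \<and> dom \<gamma> = (label_vars l \<union> guard_vars g) - dom (fst c)
        \<and> (let \<rho> = fst c ++ \<gamma> in
             sat \<rho> g
           \<and> a = (case l of None \<Rightarrow> None | Some s \<Rightarrow> eval_sym \<rho> s)
           \<and> fst c' = \<rho> |` {x \<in> dom \<rho>. snd c' \<notin> kappa A x}))"

definition opt_word :: "'a option \<Rightarrow> 'a list" where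
  "opt_word a = (case a of None \<Rightarrow> [] | Some b \<Rightarrow> [b])"

inductive gva_steps :: "('a, 'x, 'q) gva \<Rightarrow> ('a, 'x, 'q) config \<Rightarrow> 'a list
     \<Rightarrow> ('a, 'x, 'q) config \<Rightarrow> bool" for A where
  refl: "gva_steps A c [] c"
| step: "gva_step A c a c' \<Longrightarrow> gva_steps A c' w c'' \<Longrightarrow> gva_steps A c (opt_word a @ w) c''"

definition gva_lang :: "('a, 'x, 'q) gva \<Rightarrow> 'a list set" where
  "gva_lang A = {w. \<exists>q0 \<in> init A. \<exists>\<sigma> qf. qf \<in> final A \<and> gva_steps A (Map.empty, q0) w (\<sigma>, qf)}"

end

theory Submission
  imports Defs
begin

lemma card_ran_le: "finite (dom p) \<Longrightarrow> card (ran p) \<le> card (dom p)"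
proof -
  assume f: "finite (dom p)"
  have "ran p = (\<lambda>x. the (p x)) ` dom p"
    unfolding ran_def by force
  thus ?thesis using card_image_le[OF f] by simp
qed

lemma extend:
  fixes a :: "nat \<Rightarrow> 'a"
  assumes fin: "finite R" and sub: "R0 \<subseteq> R" and cardR: "card R \<le> n"
    and inj: "inj_on f (R0 \<union> C)" and fixC: "\<forall>c\<in>C. f c = c"
    and img: "f ` R0 \<subseteq> a ` {..<n} \<union> C"
    and ia: "inj_on a {..<n}" and disj: "a ` {..<n} \<inter> C = {}"
  shows "\<exists>f'. (\<forall>x\<in>R0. f' x = f x) \<and> inj_on f' (R \<union> C) \<and> (\<forall>c\<in>C. f' c = c)
              \<and> f' ` R \<subseteq> a ` {..<n} \<union> C"
proof -
  define P where "P = a ` {..<n}"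
  define R0' where "R0' = R0 - C"
  define X where "X = R - R0 - C"
  have cP: "card P = n" unfolding P_def using card_image[OF ia] by simp
  have fR0': "f ` R0' \<subseteq> P"
  proof
    fix y assume "y \<in> f ` R0'"
    then obtain x where x: "x \<in> R0'" "y = f x" by auto
    have "f x \<notin> C"
    proof
      assume fc: "f x \<in> C"
      hence "f (f x) = f x" using fixC by auto
      hence "f x = x" using inj fc x(1) unfolding R0'_def inj_on_def by blast
      thus False using fc x(1) unfolding R0'_def by auto
    qed
    thus "y \<in> P" using img x unfolding P_def R0'_def by auto
  qed
  have finR0': "finite R0'" using fin sub unfolding R0'_def by (auto intro: finite_subset)
  have finX: "finite X" using fin unfolding X_def by auto
  have cimg: "card (f ` R0') = card R0'"
  proof -
    have "inj_on f R0'" using inj unfolding R0'_def by (rule inj_on_subset) auto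
    thus ?thesis by (rule card_image)
  qed
  define T where "T = P - f ` R0'"
  have finP: "finite P" unfolding P_def by auto
  have "card T = card P - card (f ` R0')" unfolding T_def
    by (rule card_Diff_subset) (use finR0' fR0' in auto)
  hence cT: "card T = n - card R0'" using cP cimg by simp
  have "card X + card R0' = card (X \<union> R0')"
    by (rule card_Un_disjoint[symmetric]) (use finX finR0' in \<open>auto simp: X_def R0'_def\<close>)
  also have "\<dots> \<le> card R" by (rule card_mono[OF fin]) (use sub in \<open>auto simp: X_def R0'_def\<close>)
  finally have "card X \<le> card T" using cardR cT by linarith
  then obtain g where g: "g ` X \<subseteq> T" "inj_on g X"
    using card_le_inj[OF finX, of T] finP unfolding T_def by auto
  define f' where "f' = (\<lambda>x. if x \<in> X then g x else f x)"
  have "(\<forall>x\<in>R0. f' x = f x)" unfolding f'_def X_def by auto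
  moreover have "(\<forall>c\<in>C. f' c = c)" unfolding f'_def X_def using fixC by auto
  moreover have "f' ` R \<subseteq> a ` {..<n} \<union> C"
  proof
    fix y assume "y \<in> f' ` R"
    then obtain x where x: "x \<in> R" "y = f' x" by auto
    show "y \<in> a ` {..<n} \<union> C"
    proof (cases "x \<in> X")
      case True thus ?thesis using g x unfolding f'_def T_def P_def by auto
    next
      case False
      hence "x \<in> R0 \<or> x \<in> C" using x unfolding X_def by auto
      thus ?thesis using img fixC x False unfolding f'_def by auto
    qed
  qed
  moreover have "inj_on f' (R \<union> C)"
  proof (rule inj_onI)
    fix x y assume xy: "x \<in> R \<union> C" "y \<in> R \<union> C" "f' x = f' y"
    have imgo: "f' z \<in> f ` R0' \<union> C" if "z \<in> R \<union> C" "z \<notin> X" for z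
    proof -
      have "z \<in> R0' \<or> z \<in> C" using that unfolding X_def R0'_def by auto
      moreover have "f' z = f z" using that(2) unfolding f'_def by simp
      ultimately show ?thesis using fixC by auto
    qed
    have imgX: "f' z \<in> T" if "z \<in> X" for z using that g unfolding f'_def by auto
    have TC: "T \<inter> (f ` R0' \<union> C) = {}"
    proof -
      have "T \<subseteq> P - f ` R0'" "P \<inter> C = {}" using disj unfolding T_def P_def by auto
      thus ?thesis by blast
    qed
    show "x = y"
    proof (cases "x \<in> X"; cases "y \<in> X")
      assume h: "x \<in> X" "y \<in> X"
      have "g x = g y" using h xy(3) unfolding f'_def by simp
      thus ?thesis using g(2) h by (simp add: inj_on_eq_iff)
    next
      assume h: "x \<in> X" "y \<notin> X"
      have "f' x \<in> T" "f' y \<in> f ` R0' \<union> C" using imgX[OF h(1)] imgo[OF xy(2) h(2)] by auto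
      hence "f' x \<in> T \<inter> (f ` R0' \<union> C)" using xy(3) by simp
      hence False using TC by simp
      thus ?thesis ..
    next
      assume h: "x \<notin> X" "y \<in> X"
      have "f' y \<in> T" "f' x \<in> f ` R0' \<union> C" using imgX[OF h(2)] imgo[OF xy(1) h(1)] by auto
      hence "f' y \<in> T \<inter> (f ` R0' \<union> C)" using xy(3) by simp
      hence False using TC by simp
      thus ?thesis ..
    next
      assume nx: "x \<notin> X" "y \<notin> X"
      have m: "x \<in> R0 \<union> C" "y \<in> R0 \<union> C" using nx xy unfolding X_def by auto
      have "f x = f y" using nx xy(3) unfolding f'_def by simp
      thus ?thesis using inj m by (simp add: inj_on_eq_iff)
    qed
  qed
  ultimately show ?thesis by blast
qed

lemma eval_rename:
  "sym_letters s \<subseteq> C \<Longrightarrow> \<forall>c\<in>C. f c = c \<Longrightarrow>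
   eval_sym (map_option f \<circ> \<rho>) s = map_option f (eval_sym \<rho> s)"
  by (cases s) auto

lemma eval_rename':
  "sym_letters s \<subseteq> C \<Longrightarrow> \<forall>c\<in>C. f c = c \<Longrightarrow>
   eval_sym (\<lambda>x. map_option f (\<rho> x)) s = map_option f (eval_sym \<rho> s)"
  by (cases s) auto

lemma eval_range: "eval_sym \<rho> s = Some v \<Longrightarrow> v \<in> ran \<rho> \<union> sym_letters s"
  by (cases s) (auto simp: ran_def)

lemma sat_rename:
  "guard_letters g \<subseteq> C \<Longrightarrow> \<forall>c\<in>C. f c = c \<Longrightarrow> inj_on f (ran \<rho> \<union> C) \<Longrightarrow>
   sat \<rho> g \<Longrightarrow> sat (map_option f \<circ> \<rho>) g"
proof (induction g)
  case (GEq s t)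
  then obtain u where uv: "eval_sym \<rho> s = Some u" "eval_sym \<rho> t = Some u" by auto
  thus ?case using GEq.prems eval_rename'[of s C f \<rho>] eval_rename'[of t C f \<rho>] by auto
next
  case (GNeq s t)
  then obtain u v where uv: "eval_sym \<rho> s = Some u" "eval_sym \<rho> t = Some v" "u \<noteq> v" by auto
  have "u \<in> ran \<rho> \<union> C" "v \<in> ran \<rho> \<union> C" using eval_range[OF uv(1)] eval_range[OF uv(2)] GNeq.prems(1) by auto
  hence "f u \<noteq> f v" using uv(3) GNeq.prems(3) unfolding inj_on_def by blast
  thus ?case using GNeq.prems uv eval_rename'[of s C f \<rho>] eval_rename'[of t C f \<rho>] by auto
qed auto

lemma map_add_rename: "map_option f \<circ> (\<sigma> ++ \<gamma>) = (map_option f \<circ> \<sigma>) ++ (map_option f \<circ> \<gamma>)"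
  by (rule ext) (auto simp: map_add_def split: option.splits)

lemma restrict_rename: "(map_option f \<circ> \<rho>) |` D = map_option f \<circ> (\<rho> |` D)"
  by (rule ext) (auto simp: restrict_map_def)

lemma dom_rename[simp]: "dom (map_option f \<circ> m) = dom m"
  by (auto simp: dom_def)

lemma rename_cong: "\<forall>x\<in>ran \<sigma>. f' x = f x \<Longrightarrow> map_option f' \<circ> \<sigma> = map_option f \<circ> \<sigma>"
proof (rule ext)
  fix x assume h: "\<forall>x\<in>ran \<sigma>. f' x = f x"
  show "(map_option f' \<circ> \<sigma>) x = (map_option f \<circ> \<sigma>) x"
    using h by (cases "\<sigma> x") (auto simp: ran_def)
qed

lemma main_lemma:
  fixes a :: "nat \<Rightarrow> 'a"
  assumes steps: "gva_steps A c w c'"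
    and wf: "wf_gva A" and nv: "n = card (vars A)"
    and ia: "inj_on a {..<n}" and disj: "a ` {..<n} \<inter> gva_consts A = {}"
  shows "\<And>f. dom (fst c) \<subseteq> vars A \<Longrightarrow> inj_on f (ran (fst c) \<union> gva_consts A)
     \<Longrightarrow> (\<forall>x\<in>gva_consts A. f x = x) \<Longrightarrow> f ` ran (fst c) \<subseteq> a ` {..<n} \<union> gva_consts A
     \<Longrightarrow> \<exists>w' \<sigma>'. w' \<in> lists (a ` {..<n} \<union> gva_consts A) \<and>
            gva_steps A (map_option f \<circ> fst c, snd c) w' (\<sigma>', snd c')"
  using steps
proof (induction rule: gva_steps.induct)
  case (refl c)
  show ?case by (rule exI[of _ "[]"]) (auto intro: gva_steps.refl)
next
  case (step c b c1 w c2)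
  let ?C = "gva_consts A"
  let ?S = "a ` {..<n} \<union> ?C"
  obtain \<sigma> q where c: "c = (\<sigma>, q)" by (cases c)
  obtain \<sigma>1 q1 where c1: "c1 = (\<sigma>1, q1)" by (cases c1)
  have "\<exists>l g \<gamma>. (q, l, g, q1) \<in> trans A \<and> dom \<gamma> = (label_vars l \<union> guard_vars g) - dom \<sigma>
    \<and> sat (\<sigma> ++ \<gamma>) g
    \<and> b = (case l of None \<Rightarrow> None | Some s \<Rightarrow> eval_sym (\<sigma> ++ \<gamma>) s)
    \<and> \<sigma>1 = (\<sigma> ++ \<gamma>) |` {x \<in> dom (\<sigma> ++ \<gamma>). q1 \<notin> kappa A x}"
    using step.hyps(1) unfolding gva_step_def c c1 fst_conv snd_conv Let_def .
  then obtain l g \<gamma> where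
    tr: "(q, l, g, q1) \<in> trans A" and dg: "dom \<gamma> = (label_vars l \<union> guard_vars g) - dom \<sigma>"
    and st: "sat (\<sigma> ++ \<gamma>) g"
    and lb: "b = (case l of None \<Rightarrow> None | Some s \<Rightarrow> eval_sym (\<sigma> ++ \<gamma>) s)"
    and s1: "\<sigma>1 = (\<sigma> ++ \<gamma>) |` {x \<in> dom (\<sigma> ++ \<gamma>). q1 \<notin> kappa A x}"
    by (elim exE conjE)
  define \<rho> where "\<rho> = \<sigma> ++ \<gamma>"
  have lv: "label_vars l \<subseteq> vars A" "guard_vars g \<subseteq> vars A" using wf tr unfolding wf_gva_def by blast+
  have ll: "label_letters l \<subseteq> ?C" "guard_letters g \<subseteq> ?C"
    using tr unfolding gva_consts_def by blast+
  have dsig: "dom \<sigma> \<subseteq> vars A" using step.prems c by simp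
  have drho: "dom \<rho> \<subseteq> vars A" unfolding \<rho>_def using dg lv dsig by auto
  have finv: "finite (vars A)" using wf unfolding wf_gva_def by blast
  have finrho: "finite (dom \<rho>)" using drho finv by (auto intro: finite_subset)
  have cardR: "card (ran \<rho>) \<le> n"
    using card_ran_le[OF finrho] card_mono[OF finv drho] nv by linarith
  have disjd: "dom \<sigma> \<inter> dom \<gamma> = {}" using dg by auto
  have R0sub: "ran \<sigma> \<subseteq> ran \<rho>" unfolding \<rho>_def using ran_map_add[OF disjd] by auto
  obtain f' where f': "\<forall>x\<in>ran \<sigma>. f' x = f x" "inj_on f' (ran \<rho> \<union> ?C)" "\<forall>c\<in>?C. f' c = c"
     "f' ` ran \<rho> \<subseteq> ?S"
    using extend[OF finite_ran[OF finrho] R0sub cardR _ _ _ ia disj, of f] step.prems c by auto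
  have ran1: "ran \<sigma>1 \<subseteq> ran \<rho>" unfolding s1 \<rho>_def[symmetric] by (auto simp: ran_def restrict_map_def split: if_splits)
  have dom1: "dom \<sigma>1 \<subseteq> vars A" using drho unfolding s1 \<rho>_def[symmetric] by auto
  have "\<exists>w' \<sigma>'. w' \<in> lists ?S \<and> gva_steps A (map_option f' \<circ> fst c1, snd c1) w' (\<sigma>', snd c2)"
  proof (rule step.IH)
    show "dom (fst c1) \<subseteq> vars A" using dom1 c1 by simp
    show "inj_on f' (ran (fst c1) \<union> ?C)" using f'(2) ran1 c1 by (auto intro: inj_on_subset)
    show "\<forall>x\<in>?C. f' x = x" using f'(3) by simp
    show "f' ` ran (fst c1) \<subseteq> ?S" using f'(4) ran1 c1 by auto
  qed
  then obtain w' \<sigma>' where w': "w' \<in> lists ?S" "gva_steps A (map_option f' \<circ> \<sigma>1, q1) w' (\<sigma>', snd c2)"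
    using c1 by auto
  define b' where "b' = (case l of None \<Rightarrow> None | Some s \<Rightarrow> eval_sym (map_option f' \<circ> \<rho>) s)"
  have sigeq: "map_option f \<circ> \<sigma> = map_option f' \<circ> \<sigma>" using rename_cong[OF f'(1)] by simp
  have newstep: "gva_step A (map_option f \<circ> \<sigma>, q) b' (map_option f' \<circ> \<sigma>1, q1)"
    unfolding gva_step_def b'_def \<rho>_def
    apply (rule exI[of _ l], rule exI[of _ g], rule exI[of _ "map_option f' \<circ> \<gamma>"])
    using tr dg sat_rename[OF ll(2) f'(3) f'(2)[unfolded \<rho>_def] st]
    by (simp add: Let_def sigeq map_add_rename[symmetric] restrict_rename s1)
  have b'S: "opt_word b' \<in> lists ?S"
  proof (cases l)
    case (Some s)
    have sl: "sym_letters s \<subseteq> ?C" using ll(1) Some by (simp add: label_letters_def)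
    show ?thesis
    proof (cases "eval_sym \<rho> s")
      case (Some v)
      hence "v \<in> ran \<rho> \<union> ?C" using eval_range[of \<rho> s v] sl by auto
      hence "f' v \<in> ?S" using f'(3,4) by auto
      thus ?thesis using Some \<open>l = Some s\<close> eval_rename[OF sl f'(3)]
        by (simp add: b'_def opt_word_def)
    qed (use \<open>l = Some s\<close> eval_rename[OF sl f'(3)] in \<open>simp add: b'_def opt_word_def\<close>)
  qed (simp add: b'_def opt_word_def)
  have "gva_steps A (map_option f \<circ> \<sigma>, q) (opt_word b' @ w') (\<sigma>', snd c2)"
    by (rule gva_steps.step[OF newstep w'(2)])
  moreover have "opt_word b' @ w' \<in> lists ?S" using b'S w'(1) by simp
  ultimately show ?case using c by (simp only: fst_conv snd_conv) blast
qed

theorem mainTheorem4: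
  fixes A :: "('a, 'x, 'q) gva" and n :: nat and a :: "nat \<Rightarrow> 'a"
  assumes "infinite (UNIV :: 'a set)"
    and "wf_gva A"
    and "n = card (vars A)"
    and "inj_on a {..<n}"
    and "a ` {..<n} \<inter> gva_consts A = {}"
  shows "gva_lang A \<noteq> {} \<longleftrightarrow> gva_lang A \<inter> lists (a ` {..<n} \<union> gva_consts A) \<noteq> {}"
proof
  assume "gva_lang A \<noteq> {}"
  then obtain w q0 \<sigma> qf where w: "q0 \<in> init A" "qf \<in> final A" "gva_steps A (Map.empty, q0) w (\<sigma>, qf)"
    unfolding gva_lang_def by blast
  obtain w' \<sigma>' where "w' \<in> lists (a ` {..<n} \<union> gva_consts A)"
      "gva_steps A (map_option id \<circ> Map.empty, q0) w' (\<sigma>', qf)"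
    using main_lemma[OF w(3) assms(2-5), of id] by auto
  moreover have "map_option id \<circ> Map.empty = Map.empty" by auto
  ultimately have "w' \<in> gva_lang A" using w unfolding gva_lang_def by auto
  thus "gva_lang A \<inter> lists (a ` {..<n} \<union> gva_consts A) \<noteq> {}"
    using \<open>w' \<in> lists _\<close> by blast
qed auto

end
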